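(* Let $c:[0,\infty)\to[0,\infty)$ be arbitrary and let the phase field function $\psi:\mathbb{R}\to[0,\infty)$ have mass $\int_{\mathbb{R}}\psi\,dy=w>0$ and maximum value $\hat\psi=\max_{y\in\mathbb{R}}\psi(y)$. Then $F^c[\psi]\geq\frac{(\hat\psi/2)^3}{w/2}$.
   Context: For $c:[0,\infty)\to[0,\infty)$ and $\psi:\mathbb{R}\to\mathbb{R}$ (with locally integrable weak derivative; otherwise the energy is $+\infty$), $F^c[\psi]=\int_{\mathbb{R}}\frac12|\psi'(y)|^2+c(|\psi(y)|)\,dy$. *)

theory Defs
  imports "HOL-Analysis.Analysis"
begin

definition test_function :: "(real \<Rightarrow> real) \<Rightarrow> bool" where
  "test_function \<phi> \<longleftrightarrow>
     (\<forall>n. \<forall>x. ((deriv ^^ n) \<phi>) differentiable (at x)) \<and>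
     bounded (closure {x. \<phi> x \<noteq> 0})"

definition locally_integrable :: "(real \<Rightarrow> real) \<Rightarrow> bool" where
  "locally_integrable f \<longleftrightarrow>
     (\<forall>a b. set_integrable lborel {a..b} f)"

definition weak_deriv :: "(real \<Rightarrow> real) \<Rightarrow> (real \<Rightarrow> real) \<Rightarrow> bool" where
  "weak_deriv \<psi> g \<longleftrightarrow>
     locally_integrable \<psi> \<and> locally_integrable g \<and>
     (\<forall>\<phi>. test_function \<phi> \<longrightarrow>
        (\<integral>y. \<psi> y * deriv \<phi> y \<partial>lborel) = - (\<integral>y. g y * \<phi> y \<partial>lborel))"

text \<open>The energy F^c[psi]; +infinity if psi has no locally integrable weak derivative.
  Weak derivatives agree a.e., so the choice of g is irrelevant.\<close>
definition energy :: "(real \<Rightarrow> real) \<Rightarrow> (real \<Rightarrow> real) \<Rightarrow> ennreal" where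
  "energy c \<psi> =
     (if \<exists>g. weak_deriv \<psi> g
      then (\<integral>\<^sup>+ y. ennreal ((1/2) * \<bar>(SOME g. weak_deriv \<psi> g) y\<bar>^2 + c \<bar>\<psi> y\<bar>) \<partial>lborel)
      else top)"

end

theory Submission
  imports Defs
begin

definition fk :: "nat \<Rightarrow> real \<Rightarrow> real" where
  "fk k x = (if x > 0 then exp (- 1 / x) / x ^ k else 0)"

lemma fk_lim: "((\<lambda>h::real. exp (- 1 / h) / h ^ k) \<longlongrightarrow> 0) (at_right 0)"
proof -
  have "((\<lambda>h. (inverse h) ^ k / exp (inverse h)) \<longlongrightarrow> (0::real)) (at_right 0)"
    by (rule filterlim_compose[OF tendsto_power_div_exp_0 filterlim_inverse_at_top_right])
  moreover have "eventually (\<lambda>h. (inverse h) ^ k / exp (inverse h) = exp (- 1 / h) / h ^ k) (at_right (0::real))"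
    by (rule eventually_mono[OF eventually_at_right_less[of "0::real"]])
       (simp add: exp_minus power_inverse divide_inverse mult.commute)
  ultimately show ?thesis
    by (rule Lim_transform_eventually)
qed

lemma fk_pos_deriv:
  assumes "x > 0" shows "((\<lambda>y. exp (- 1 / y) / y ^ k) has_real_derivative
          (exp (- 1 / x) * (1 / x^2) * x ^ k - exp (- 1 / x) * (real k * x ^ (k - 1))) / (x ^ k)^2) (at x)"
  using assms
  apply (intro derivative_eq_intros refl)
  apply (auto simp: power2_eq_square)
  done

lemma fk_pos_alg:
  assumes x: "x > 0" shows "(exp (- 1 / x) * (1 / x^2) * x ^ k - exp (- 1 / x) * (real k * x ^ (k - 1))) / (x ^ k)^2
          = fk (k+2) x - real k * fk (k+1) x"
proof (cases k)
  case 0 then show ?thesis using x by (simp add: fk_def power2_eq_square)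
next
  case (Suc m)
  have xk: "x ^ k > 0" using x by simp
  have "(exp (- 1 / x) * (1 / x^2) * x ^ k - exp (- 1 / x) * (real k * x ^ (k - 1))) / (x ^ k)^2
     = exp (- 1 / x) / (x^2 * x^k) - real k * exp (- 1 / x) * (x * x ^ (k - 1)) / (x * x^k * x^k)"
    using x xk by (simp add: power2_eq_square divide_simps)
  also have "x * x ^ (k - 1) = x ^ k" using Suc by simp
  also have "real k * exp (- 1 / x) * x ^ k / (x * x^k * x^k) = real k * (exp (- 1 / x) / (x ^ (k+1)))"
    using x xk by (simp add: field_simps)
  finally show ?thesis using x by (simp add: fk_def power_add power2_eq_square mult.commute)
qed

lemma fk_deriv: "(fk k has_real_derivative (fk (k+2) x - real k * fk (k+1) x)) (at x)"
proof -
  consider "x > 0" | "x < 0" | "x = 0" by linarith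
  then show ?thesis
  proof cases
    case 1
    have "eventually (\<lambda>y. y \<in> {0<..}) (nhds x)" by (rule eventually_nhds_in_open) (use 1 in auto)
    then have ev: "eventually (\<lambda>y. fk k y = exp (- 1 / y) / y ^ k) (nhds x)"
      by (rule eventually_mono) (simp add: fk_def)
    have "((\<lambda>y. exp (- 1 / y) / y ^ k) has_real_derivative (fk (k+2) x - real k * fk (k+1) x)) (at x)"
      using fk_pos_deriv[OF 1, of k] fk_pos_alg[OF 1, of k] by simp
    then show ?thesis using DERIV_cong_ev[OF refl ev refl] by simp
  next
    case 2
    have "eventually (\<lambda>y. y \<in> {..<0}) (nhds x)" by (rule eventually_nhds_in_open) (use 2 in auto)
    then have ev: "eventually (\<lambda>y. fk k y = 0) (nhds x)"
      by (rule eventually_mono) (simp add: fk_def)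
    have "((\<lambda>y. 0) has_real_derivative 0) (at x)" by simp
    then have "(fk k has_real_derivative 0) (at x)" using DERIV_cong_ev[OF refl ev refl] by simp
    then show ?thesis using 2 by (simp add: fk_def)
  next
    case 3
    have r: "((\<lambda>h. (fk k (0 + h) - fk k 0) / h) \<longlongrightarrow> 0) (at_right 0)"
    proof -
      have "((\<lambda>h::real. exp (- 1 / h) / h ^ (k+1)) \<longlongrightarrow> 0) (at_right 0)" by (rule fk_lim)
      moreover have "eventually (\<lambda>h. exp (- 1 / h) / h ^ (k+1) = (fk k (0 + h) - fk k 0) / h) (at_right 0)"
        using eventually_at_right_less[of "0::real"] by (rule eventually_mono) (simp add: fk_def power_Suc2)
      ultimately show ?thesis by (rule Lim_transform_eventually)
    qed
    have l: "((\<lambda>h. (fk k (0 + h) - fk k 0) / h) \<longlongrightarrow> 0) (at_left 0)"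
    proof -
      have "eventually (\<lambda>h. 0 = (fk k (0 + h) - fk k 0) / h) (at_left 0)"
        using eventually_at_left_real[of "-1::real" 0, simplified] by (rule eventually_mono) (simp add: fk_def)
      with tendsto_const[of "0::real" "at_left 0"] show ?thesis by (rule Lim_transform_eventually)
    qed
    have "(fk k has_real_derivative 0) (at 0)"
      unfolding DERIV_def using r l by (simp add: filterlim_at_split)
    then show ?thesis using 3 by (simp add: fk_def)
  qed
qed

definition Dn :: "nat \<Rightarrow> (real \<Rightarrow> real) \<Rightarrow> bool" where
  "Dn n h \<longleftrightarrow> (\<forall>j\<le>n. \<forall>x. ((deriv ^^ j) h) differentiable (at x))"

lemma Dn_0: "Dn 0 h \<longleftrightarrow> (\<forall>x. h differentiable (at x))"
  by (simp add: Dn_def)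

lemma Dn_Suc: "Dn (Suc n) h \<longleftrightarrow> (\<forall>x. h differentiable (at x)) \<and> Dn n (deriv h)"
proof -
  have *: "(deriv ^^ Suc j) h = (deriv ^^ j) (deriv h)" for j
    by (simp add: funpow_Suc_right del: funpow.simps)
  show ?thesis
    unfolding Dn_def
  proof safe
    fix j x assume "\<forall>j\<le>Suc n. \<forall>x. (deriv ^^ j) h differentiable at x" "j \<le> n"
    then show "(deriv ^^ j) (deriv h) differentiable at x" using *[of j] by (metis Suc_le_mono)
  next
    fix x assume "\<forall>j\<le>Suc n. \<forall>x. (deriv ^^ j) h differentiable at x"
    then show "h differentiable at x" by (metis funpow_0 le0)
  next
    fix j x assume a: "\<forall>x. h differentiable at x" "\<forall>j\<le>n. \<forall>x. (deriv ^^ j) (deriv h) differentiable at x" "j \<le> Suc n"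
    show "(deriv ^^ j) h differentiable at x"
    proof (cases j)
      case 0 then show ?thesis using a by simp
    next
      case (Suc i) then show ?thesis using a *[of i] by simp
    qed
  qed
qed

lemma Dn_diff: "Dn n h \<Longrightarrow> (h has_real_derivative deriv h x) (at x)"
  unfolding Dn_def DERIV_deriv_iff_real_differentiable by (metis funpow_0 le0)

lemma Dn_mono: "Dn (Suc n) h \<Longrightarrow> Dn n h"
  by (simp add: Dn_def)

lemma Dn_add: "Dn n f \<Longrightarrow> Dn n g \<Longrightarrow> Dn n (\<lambda>x. f x + g x)"
proof (induction n arbitrary: f g)
  case 0 then show ?case by (auto simp: Dn_0)
next
  case (Suc n)
  have d: "deriv (\<lambda>x. f x + g x) = (\<lambda>x. deriv f x + deriv g x)"
    using Dn_diff[OF Suc.prems(1)] Dn_diff[OF Suc.prems(2)]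
    by (intro ext DERIV_imp_deriv derivative_intros) auto
  show ?case using Suc by (auto simp: Dn_Suc d)
qed

lemma Dn_cmult: "Dn n f \<Longrightarrow> Dn n (\<lambda>x. c * f x)"
proof (induction n arbitrary: f)
  case 0 then show ?case by (auto simp: Dn_0)
next
  case (Suc n)
  have d: "deriv (\<lambda>x. c * f x) = (\<lambda>x. c * deriv f x)"
    using Dn_diff[OF Suc.prems(1)]
    by (intro ext DERIV_imp_deriv DERIV_cmult) auto
  show ?case using Suc by (auto simp: Dn_Suc d)
qed

lemma Dn_diff_fun: "Dn n f \<Longrightarrow> Dn n g \<Longrightarrow> Dn n (\<lambda>x. f x - g x)"
  using Dn_add[of n f "\<lambda>x. (-1) * g x"] Dn_cmult[of n g "-1"] by simp

lemma Dn_mult: "Dn n f \<Longrightarrow> Dn n g \<Longrightarrow> Dn n (\<lambda>x. f x * g x)"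
proof (induction n arbitrary: f g)
  case 0 then show ?case by (auto simp: Dn_0)
next
  case (Suc n)
  have d: "deriv (\<lambda>x. f x * g x) = (\<lambda>x. deriv f x * g x + f x * deriv g x)"
    using Dn_diff[OF Suc.prems(1)] Dn_diff[OF Suc.prems(2)]
    by (intro ext DERIV_imp_deriv derivative_eq_intros refl) auto
  have "Dn n (\<lambda>x. deriv f x * g x + f x * deriv g x)"
    using Suc Dn_mono[OF Suc.prems(1)] Dn_mono[OF Suc.prems(2)]
    by (intro Dn_add) (auto simp: Dn_Suc)
  then show ?case using Suc by (auto simp: Dn_Suc d)
qed

lemma Dn_affine: "Dn n f \<Longrightarrow> Dn n (\<lambda>x. f (a * x + b))"
proof (induction n arbitrary: f)
  case 0
  show ?case unfolding Dn_0
  proof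
    fix x
    have "((\<lambda>x. f (a * x + b)) has_real_derivative deriv f (a * x + b) * a) (at x)"
      using Dn_diff[OF 0] by (intro DERIV_chain2[where f = f]) (auto intro!: derivative_eq_intros)
    then show "(\<lambda>x. f (a * x + b)) differentiable at x" using real_differentiable_def by blast
  qed
next
  case (Suc n)
  have D: "((\<lambda>x. f (a * x + b)) has_real_derivative deriv f (a * x + b) * a) (at x)" for x
    using Dn_diff[OF Suc.prems] by (intro DERIV_chain2[where f = f]) (auto intro!: derivative_eq_intros)
  have d: "deriv (\<lambda>x. f (a * x + b)) = (\<lambda>x. a * deriv f (a * x + b))"
    using D by (intro ext DERIV_imp_deriv) (simp add: mult.commute)
  have "Dn n (\<lambda>x. a * deriv f (a * x + b))"
    using Suc by (intro Dn_cmult) (auto simp: Dn_Suc)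
  then show ?case using D d real_differentiable_def by (auto simp: Dn_Suc)
qed

lemma Dn_inverse: "Dn n f \<Longrightarrow> (\<And>x. f x \<noteq> 0) \<Longrightarrow> Dn n (\<lambda>x. inverse (f x))"
proof (induction n arbitrary: f)
  case 0
  show ?case unfolding Dn_0
  proof
    fix x
    have "((\<lambda>x. inverse (f x)) has_real_derivative - (deriv f x * inverse (f x ^ Suc (Suc 0)))) (at x)"
      using DERIV_inverse_fun[OF Dn_diff[OF 0(1)] 0(2)] .
    then show "(\<lambda>x. inverse (f x)) differentiable at x" using real_differentiable_def by blast
  qed
next
  case (Suc n)
  have D: "((\<lambda>x. inverse (f x)) has_real_derivative - (deriv f x * (inverse (f x) * inverse (f x)))) (at x)" for x
    using DERIV_inverse_fun[OF Dn_diff[OF Suc.prems(1)] Suc.prems(2)]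
    by (simp add: inverse_mult_distrib)
  have d: "deriv (\<lambda>x. inverse (f x)) = (\<lambda>x. (-1) * (deriv f x * (inverse (f x) * inverse (f x))))"
    using D by (intro ext DERIV_imp_deriv) simp
  have I: "Dn n (\<lambda>x. inverse (f x))" using Suc Dn_mono by blast
  have "Dn n (\<lambda>x. (-1) * (deriv f x * (inverse (f x) * inverse (f x))))"
    using Suc.prems I by (intro Dn_cmult Dn_mult) (auto simp: Dn_Suc)
  then show ?case using D d real_differentiable_def by (auto simp: Dn_Suc)
qed

lemma Dn_fk: "Dn n (fk k)"
proof (induction n arbitrary: k)
  case 0 then show ?case using fk_deriv real_differentiable_def by (auto simp: Dn_0)
next
  case (Suc n)
  have d: "deriv (fk k) = (\<lambda>x. fk (k+2) x - real k * fk (k+1) x)"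
    using fk_deriv by (intro ext DERIV_imp_deriv) auto
  have "Dn n (\<lambda>x. fk (k+2) x - real k * fk (k+1) x)"
    using Suc by (intro Dn_diff_fun Dn_cmult) auto
  then show ?case using fk_deriv real_differentiable_def d by (auto simp: Dn_Suc)
qed

lemma fk0_deriv: "(fk 0 has_real_derivative fk 2 x) (at x)"
  using fk_deriv[of 0 x] by (simp add: numeral_2_eq_2)

lemma fk_nonneg: "fk k x \<ge> 0"
  by (simp add: fk_def)

lemma fk_pos: "x > 0 \<Longrightarrow> fk 0 x > 0"
  by (simp add: fk_def)

lemma fk_zero: "x \<le> 0 \<Longrightarrow> fk k x = 0"
  by (simp add: fk_def)

lemma fk_isCont: "isCont (fk k) x"
  using fk_deriv DERIV_isCont by blast

definition den :: "real \<Rightarrow> real" where "den t = fk 0 t + fk 0 (1 - t)"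

lemma den_pos: "den t > 0"
proof (cases "t > 0")
  case True then show ?thesis using fk_pos[of t] fk_nonneg[of 0 "1-t"] by (simp add: den_def)
next
  case False then show ?thesis using fk_pos[of "1-t"] fk_nonneg[of 0 t] by (simp add: den_def)
qed

definition S :: "real \<Rightarrow> real" where "S t = fk 0 t * inverse (den t)"

definition S1 :: "real \<Rightarrow> real" where
  "S1 t = (fk 2 t * fk 0 (1 - t) + fk 0 t * fk 2 (1 - t)) / (den t)^2"

lemma S_deriv: "(S has_real_derivative S1 t) (at t)"
proof -
  have d: "(den has_real_derivative fk 2 t - fk 2 (1 - t)) (at t)"
    unfolding den_def[abs_def]
    by (rule derivative_eq_intros DERIV_chain2[where f="fk 0", OF fk0_deriv] fk0_deriv refl)+ simp
  have "((\<lambda>t. fk 0 t * inverse (den t)) has_real_derivative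
      fk 2 t * inverse (den t) + (- ((fk 2 t - fk 2 (1 - t)) * inverse (den t ^ Suc (Suc 0)))) * fk 0 t) (at t)"
    by (intro DERIV_mult fk0_deriv DERIV_inverse_fun d) (metis den_pos less_irrefl)
  moreover have "fk 2 t * inverse (den t) + (- ((fk 2 t - fk 2 (1 - t)) * inverse (den t ^ Suc (Suc 0)))) * fk 0 t
      = S1 t"
  proof -
    have alg: "a * inverse D + (- ((a - b) * inverse (D ^ Suc (Suc 0)))) * A = (a * B + A * b) / D^2"
      if "D > 0" "D = A + B" for a b A B D :: real
    proof -
      have "D \<noteq> 0" using that by simp
      have e: "a * B + A * b = a * D - (a - b) * A" using that by (simp add: algebra_simps)
      show ?thesis unfolding e using \<open>D \<noteq> 0\<close>
        by (simp add: inverse_eq_divide power2_eq_square diff_divide_distrib) (simp add: field_simps)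
    qed
    show ?thesis unfolding S1_def by (rule alg[OF den_pos]) (simp add: den_def)
  qed
  ultimately show ?thesis by (simp add: S_def[abs_def])
qed

lemma Dn_S: "Dn n S"
proof -
  have "Dn n (\<lambda>t. fk 0 (1 - t))" using Dn_affine[OF Dn_fk, of n 0 "-1" 1] by simp
  then have "Dn n den" unfolding den_def[abs_def] by (intro Dn_add Dn_fk)
  moreover have "\<And>t. den t \<noteq> 0" by (metis den_pos less_irrefl)
  ultimately have "Dn n (\<lambda>t. inverse (den t))" by (intro Dn_inverse)
  then show ?thesis unfolding S_def[abs_def] by (intro Dn_mult Dn_fk)
qed

lemma S_le0: "t \<le> 0 \<Longrightarrow> S t = 0"
  by (simp add: S_def fk_zero)

lemma S_ge1: "t \<ge> 1 \<Longrightarrow> S t = 1"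
  using den_pos[of t] by (simp add: S_def den_def fk_zero)

lemma S_bounds: "0 \<le> S t" "S t \<le> 1"
  using den_pos[of t] fk_nonneg[of 0 t] fk_nonneg[of 0 "1 - t"]
  by (auto simp: S_def den_def field_simps)

lemma S1_nonneg: "S1 t \<ge> 0"
  unfolding S1_def using fk_nonneg by (intro divide_nonneg_nonneg add_nonneg_nonneg mult_nonneg_nonneg) auto

lemma S1_zero: "t \<le> 0 \<or> t \<ge> 1 \<Longrightarrow> S1 t = 0"
  unfolding S1_def by (auto simp: fk_zero)

lemma S1_cont: "continuous_on A S1"
proof -
  have "isCont S1 t" for t
    unfolding S1_def[abs_def] den_def using den_pos[of t]
    by (intro continuous_intros continuous_at_compose[unfolded o_def, OF _ fk_isCont] fk_isCont)
       (auto simp: den_def)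
  then show ?thesis by (simp add: continuous_at_imp_continuous_on)
qed

lemma S_cont: "continuous_on A S"
  using S_deriv DERIV_isCont continuous_at_imp_continuous_on by blast

lemma S1_isCont: "isCont S1 t"
  using S1_cont[of UNIV] continuous_on_eq_continuous_at by blast

definition K :: "real \<Rightarrow> real \<Rightarrow> real \<Rightarrow> real" where
  "K p e x = S1 ((x - p) / e) / e"

lemma K_deriv: "e > 0 \<Longrightarrow> ((\<lambda>x. S ((x - p) / e)) has_real_derivative K p e x) (at x)"
  unfolding K_def
  by (rule DERIV_chain2[OF S_deriv, THEN DERIV_cong]) (auto intro!: derivative_eq_intros)

lemma K_zero: "e > 0 \<Longrightarrow> x \<notin> {p..p+e} \<Longrightarrow> K p e x = 0"
proof -
  assume e: "e > 0" and x: "x \<notin> {p..p+e}"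
  then have "(x - p) / e \<le> 0 \<or> (x - p) / e \<ge> 1"
    by (auto simp: field_simps)
  then show ?thesis by (simp add: K_def S1_zero)
qed

lemma K_nonneg: "e > 0 \<Longrightarrow> K p e x \<ge> 0"
  by (simp add: K_def S1_nonneg)

lemma K_cont: "e > 0 \<Longrightarrow> continuous_on A (K p e)"
proof -
  assume "e > 0"
  then have "isCont (K p e) x" for x
    unfolding K_def[abs_def]
    by (intro continuous_intros isCont_o2[OF _ S1_isCont]) auto
  then show ?thesis by (simp add: continuous_at_imp_continuous_on)
qed

lemma K_ind: "e > 0 \<Longrightarrow> indicator {p..p+e} x *\<^sub>R h x * K p e x = h x * K p e x"
  by (cases "x \<in> {p..p+e}") (auto simp: K_zero)

lemma K_int:
  assumes e: "e > 0"
  shows "integrable lborel (K p e)" "integral\<^sup>L lborel (K p e) = 1"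
proof -
  have eq: "(\<lambda>x. indicator {p..p+e} x *\<^sub>R K p e x) = K p e"
    using K_ind[OF e, where h="\<lambda>_. 1"] by (auto simp: fun_eq_iff)
  show "integrable lborel (K p e)"
    using borel_integrable_compact[of "{p..p+e}" "K p e"] K_cont[OF e] eq by simp
  have "integral\<^sup>L lborel (\<lambda>x. indicator {p..p+e} x *\<^sub>R K p e x) = S ((p + e - p) / e) - S ((p - p) / e)"
  proof (rule integral_FTC_atLeastAtMost)
    show "p \<le> p + e" using e by simp
    show "continuous_on {p..p + e} (K p e)" by (rule K_cont[OF e])
    fix x
    show "((\<lambda>x. S ((x - p) / e)) has_vector_derivative K p e x) (at x within {p..p + e})"
      using K_deriv[OF e, of p x]
      by (simp add: has_real_derivative_iff_has_vector_derivative[symmetric] has_field_derivative_at_within)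
  qed
  then show "integral\<^sup>L lborel (K p e) = 1"
    using e eq by (simp add: S_le0 S_ge1)
qed

lemma K_mult_integrable:
  assumes e: "e > 0" and cont: "continuous_on {p..p+e} h"
  shows "integrable lborel (\<lambda>x. h x * K p e x)"
proof -
  have "continuous_on {p..p+e} (\<lambda>x. h x * K p e x)"
    using cont K_cont[OF e] by (intro continuous_intros) auto
  from borel_integrable_compact[OF _ this] have "integrable lborel (\<lambda>x. indicator {p..p+e} x *\<^sub>R h x * K p e x)"
    by (simp add: mult.assoc)
  moreover have eq: "(\<lambda>x. indicator {p..p+e} x *\<^sub>R h x * K p e x) = (\<lambda>x. h x * K p e x)"
    by (rule ext) (rule K_ind[OF e])
  ultimately show ?thesis by simp
qed

lemma K_approx:
  fixes \<psi> :: "real \<Rightarrow> real"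
  assumes e: "e > 0" and cont: "continuous_on {p..p+e} \<psi>"
    and bnd: "\<And>x. x \<in> {p..p+e} \<Longrightarrow> \<bar>\<psi> x - \<psi> p\<bar> \<le> \<eta>"
  shows "integrable lborel (\<lambda>x. \<psi> x * K p e x)"
    and "\<bar>(\<integral>x. \<psi> x * K p e x \<partial>lborel) - \<psi> p\<bar> \<le> \<eta>"
proof -
  have gen: "integrable lborel (\<lambda>x. h x * K p e x)" if "continuous_on {p..p+e} h" for h
  proof -
    have "continuous_on {p..p+e} (\<lambda>x. h x * K p e x)"
      using that K_cont[OF e] by (intro continuous_intros) auto
    from borel_integrable_compact[OF _ this] have "integrable lborel (\<lambda>x. indicator {p..p+e} x *\<^sub>R h x * K p e x)"
      by (simp add: mult.assoc)
    moreover have eq: "(\<lambda>x. indicator {p..p+e} x *\<^sub>R h x * K p e x) = (\<lambda>x. h x * K p e x)"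
      by (rule ext) (rule K_ind[OF e])
    ultimately show ?thesis by simp
  qed
  show int: "integrable lborel (\<lambda>x. \<psi> x * K p e x)" using gen[OF cont] .
  have int2: "integrable lborel (\<lambda>x. (\<psi> x - \<psi> p) * K p e x)"
    using gen cont by (intro gen continuous_intros) auto
  have "(\<integral>x. \<psi> x * K p e x \<partial>lborel) - \<psi> p = (\<integral>x. \<psi> x * K p e x \<partial>lborel) - (\<integral>x. \<psi> p * K p e x \<partial>lborel)"
    using K_int[OF e, of p] by simp
  also have "\<dots> = (\<integral>x. (\<psi> x - \<psi> p) * K p e x \<partial>lborel)"
    using int K_int[OF e, of p] by (simp add: left_diff_distrib)
  finally have eq: "(\<integral>x. \<psi> x * K p e x \<partial>lborel) - \<psi> p = (\<integral>x. (\<psi> x - \<psi> p) * K p e x \<partial>lborel)" .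
  have "\<bar>(\<integral>x. (\<psi> x - \<psi> p) * K p e x \<partial>lborel)\<bar> \<le> (\<integral>x. \<eta> * K p e x \<partial>lborel)"
  proof (rule integral_abs_bound_integral[OF int2])
    show "integrable lborel (\<lambda>x. \<eta> * K p e x)" using K_int[OF e, of p] by simp
    fix x
    show "\<bar>(\<psi> x - \<psi> p) * K p e x\<bar> \<le> \<eta> * K p e x"
    proof (cases "x \<in> {p..p+e}")
      case True
      then show ?thesis using bnd[OF True] K_nonneg[OF e, of p x]
        by (simp add: abs_mult mult_right_mono)
    next
      case False then show ?thesis by (simp add: K_zero[OF e])
    qed
  qed
  also have "\<dots> = \<eta>" using K_int[OF e, of p] by simp
  finally show "\<bar>(\<integral>x. \<psi> x * K p e x \<partial>lborel) - \<psi> p\<bar> \<le> \<eta>" using eq by simp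
qed

lemma kern_lim:
  fixes \<psi> :: "real \<Rightarrow> real"
  assumes cont: "continuous_on UNIV \<psi>" and p: "pn \<longlonglongrightarrow> p" and e: "en \<longlonglongrightarrow> 0"
    and epos: "\<And>n. en n > 0"
  shows "(\<lambda>n. \<integral>x. \<psi> x * K (pn n) (en n) x \<partial>lborel) \<longlonglongrightarrow> \<psi> p"
proof (rule tendstoI)
  fix r :: real assume r: "r > 0"
  have "isCont \<psi> p" using cont continuous_on_eq_continuous_at open_UNIV by blast
  then obtain d where d: "d > 0" and dH: "\<And>x. x \<noteq> p \<and> norm (x - p) < d \<Longrightarrow> norm (\<psi> x - \<psi> p) < r/3"
    using LIM_D[of \<psi> "\<psi> p" p "r/3"] r unfolding isCont_def by auto
  have dH': "\<bar>\<psi> x - \<psi> p\<bar> < r/3" if "\<bar>x - p\<bar> < d" for x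
    using dH[of x] that r by (cases "x = p") auto
  have ev1: "eventually (\<lambda>n. dist (pn n) p < d/2) sequentially" by (rule tendstoD[OF p]) (use d in simp)
  have ev2: "eventually (\<lambda>n. dist (en n) 0 < d/2) sequentially" by (rule tendstoD[OF e]) (use d in simp)
  show "eventually (\<lambda>n. dist (\<integral>x. \<psi> x * K (pn n) (en n) x \<partial>lborel) (\<psi> p) < r) sequentially"
    using ev1 ev2
  proof eventually_elim
    case (elim n)
    let ?q = "pn n" and ?e = "en n"
    have q: "\<bar>?q - p\<bar> < d/2" and ee: "?e < d/2" using elim epos[of n] by (auto simp: dist_real_def)
    have bnd: "\<bar>\<psi> x - \<psi> ?q\<bar> \<le> 2 * r / 3" if "x \<in> {?q..?q + ?e}" for x
    proof -
      have q2: "?q - p < d/2 \<and> - (?q - p) < d/2" using q by (simp only: abs_less_iff)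
      have x1: "?q \<le> x" "x \<le> ?q + ?e" using that by auto
      have "\<bar>x - p\<bar> < d" unfolding abs_less_iff using q2 x1 ee epos[of n] by (intro conjI; linarith)
      then have "\<bar>\<psi> x - \<psi> p\<bar> < r/3" by (rule dH')
      moreover have "\<bar>\<psi> ?q - \<psi> p\<bar> < r/3" using q d by (intro dH') auto
      ultimately show ?thesis by linarith
    qed
    have "\<bar>(\<integral>x. \<psi> x * K ?q ?e x \<partial>lborel) - \<psi> ?q\<bar> \<le> 2 * r / 3"
      by (rule K_approx(2)[OF epos continuous_on_subset[OF cont] bnd]) auto
    moreover have "\<bar>\<psi> ?q - \<psi> p\<bar> < r/3" using q d by (intro dH') auto
    moreover have tri: "\<And>A Q P::real. \<bar>A - Q\<bar> \<le> 2 * r / 3 \<Longrightarrow> \<bar>Q - P\<bar> < r / 3 \<Longrightarrow> \<bar>A - P\<bar> < r"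
      by arith
    ultimately show ?case unfolding dist_real_def by blast
  qed
qed

lemma test_functionI:
  assumes "\<And>n. Dn n \<phi>" and "bounded (closure {x. \<phi> x \<noteq> 0})"
  shows "test_function \<phi>"
  using assms unfolding test_function_def Dn_def by blast

lemma Dn_S_aff: "e > 0 \<Longrightarrow> Dn n (\<lambda>x. S ((x - c) / e))"
proof -
  assume e: "e > 0"
  have "(\<lambda>x. S ((1/e) * x + (- c / e))) = (\<lambda>x. S ((x - c) / e))"
    by (rule ext) (simp add: diff_divide_distrib)
  then show ?thesis using Dn_affine[OF Dn_S, of n "1/e" "- c / e"] by simp
qed

lemma weak_ftc:
  fixes \<psi> g :: "real \<Rightarrow> real"
  assumes wd: "weak_deriv \<psi> g" and cont: "continuous_on UNIV \<psi>" and ab: "a < b"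
  shows "\<psi> b - \<psi> a = (\<integral>x. g x * indicator {a<..<b} x \<partial>lborel)"
proof -
  define e where "e n = (b - a) / 2 * inverse (real (Suc n))" for n
  have epos: "e n > 0" for n using ab by (simp add: e_def)
  have e2: "2 * e n \<le> b - a" for n
  proof -
    have "inverse (real (Suc n)) \<le> 1" by (auto simp: inverse_le_1_iff)
    from mult_left_mono[OF this, of "(b-a)/2"] show ?thesis using ab unfolding e_def by simp
  qed
  have elim: "e \<longlonglongrightarrow> 0"
    unfolding e_def[abs_def] using tendsto_mult[OF tendsto_const LIMSEQ_inverse_real_of_nat, of "(b-a)/2"]
    by simp
  define phi where "phi n x = S ((x - a) / e n) - S ((x - (b - e n)) / e n)" for n x
  have phi_out: "phi n x = 0" if "x \<notin> {a<..<b}" for n x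
  proof (cases "x \<le> a")
    case True
    then have "(x - a) / e n \<le> 0" "(x - (b - e n)) / e n \<le> 0"
      using epos[of n] e2[of n] by (auto simp: divide_nonpos_pos)
    then show ?thesis by (simp add: phi_def S_le0)
  next
    case False
    then have "x \<ge> b" using that by auto
    then have "(x - a) / e n \<ge> 1" "(x - (b - e n)) / e n \<ge> 1"
      using epos[of n] e2[of n] by (auto simp: field_simps)
    then show ?thesis by (simp add: phi_def S_ge1)
  qed
  have phi_bnd: "\<bar>phi n x\<bar> \<le> 1" for n x
    using S_bounds[of "(x - a) / e n"] S_bounds[of "(x - (b - e n)) / e n"] by (simp add: phi_def)
  have S_isCont: "isCont S t" for t using S_deriv DERIV_isCont by blast
  have phi_cont: "continuous_on UNIV (phi n)" for n
  proof -
    have "isCont (phi n) x" for x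
      unfolding phi_def[abs_def] using epos[of n]
      by (intro continuous_intros isCont_o2[OF _ S_isCont]) auto
    then show ?thesis by (simp add: continuous_at_imp_continuous_on)
  qed
  have test: "test_function (phi n)" for n
  proof (rule test_functionI)
    fix m show "Dn m (phi n)" unfolding phi_def[abs_def] using epos[of n] by (intro Dn_diff_fun Dn_S_aff)
  next
    have "{x. phi n x \<noteq> 0} \<subseteq> {a..b}"
    proof
      fix x assume "x \<in> {x. phi n x \<noteq> 0}"
      then have "x \<in> {a<..<b}" using phi_out by blast
      then show "x \<in> {a..b}" by auto
    qed
    then have "closure {x. phi n x \<noteq> 0} \<subseteq> {a..b}" by (intro closure_minimal) auto
    then show "bounded (closure {x. phi n x \<noteq> 0})" using bounded_closed_interval bounded_subset by blast
  qed
  have dphi: "deriv (phi n) = (\<lambda>x. K a (e n) x - K (b - e n) (e n) x)" for n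
    unfolding phi_def[abs_def]
    by (intro ext DERIV_imp_deriv DERIV_diff K_deriv epos)
  have weq: "(\<integral>x. \<psi> x * (K a (e n) x - K (b - e n) (e n) x) \<partial>lborel) = - (\<integral>x. g x * phi n x \<partial>lborel)" for n
  proof -
    have "(\<integral>y. \<psi> y * deriv (phi n) y \<partial>lborel) = - (\<integral>y. g y * phi n y \<partial>lborel)"
      using wd test[of n] unfolding weak_deriv_def by blast
    then show ?thesis by (simp add: dphi)
  qed
  have split: "(\<integral>x. \<psi> x * (K a (e n) x - K (b - e n) (e n) x) \<partial>lborel)
      = (\<integral>x. \<psi> x * K a (e n) x \<partial>lborel) - (\<integral>x. \<psi> x * K (b - e n) (e n) x \<partial>lborel)" for n
  proof -
    have ci: "continuous_on A \<psi>" for A using continuous_on_subset[OF cont] by blast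
    show ?thesis
    using K_mult_integrable[OF epos[of n] ci, of a] K_mult_integrable[OF epos[of n] ci, of "b - e n"]
    by (simp add: right_diff_distrib)
  qed
  have L1: "(\<lambda>n. \<integral>x. \<psi> x * K a (e n) x \<partial>lborel) \<longlonglongrightarrow> \<psi> a"
    by (rule kern_lim[OF cont tendsto_const elim epos])
  have L2: "(\<lambda>n. \<integral>x. \<psi> x * K (b - e n) (e n) x \<partial>lborel) \<longlonglongrightarrow> \<psi> b"
    using kern_lim[OF cont tendsto_diff[OF tendsto_const elim] elim epos, of b] by simp
  have LHS: "(\<lambda>n. - (\<integral>x. g x * phi n x \<partial>lborel)) \<longlonglongrightarrow> \<psi> a - \<psi> b"
    using tendsto_diff[OF L1 L2] weq split by simp
  have gi: "integrable lborel (\<lambda>x. indicator {a..b} x *\<^sub>R g x)"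
    using wd unfolding weak_deriv_def locally_integrable_def set_integrable_def by blast
  have gm: "(\<lambda>x. indicator {a..b} x *\<^sub>R g x) \<in> borel_measurable lborel"
    using gi by (rule borel_measurable_integrable)
  have eq_f: "g x * indicator {a<..<b} x = (indicator {a..b} x *\<^sub>R g x) * indicator {a<..<b} x" for x
    by (auto simp: indicator_def)
  have eq_s: "g x * phi n x = (indicator {a..b} x *\<^sub>R g x) * phi n x" for n x
    by (cases "x \<in> {a<..<b}") (auto simp: indicator_def phi_out)
  have RHS: "(\<lambda>n. \<integral>x. g x * phi n x \<partial>lborel) \<longlonglongrightarrow> (\<integral>x. g x * indicator {a<..<b} x \<partial>lborel)"
  proof (rule integral_dominated_convergence[where w = "\<lambda>x. \<bar>indicator {a..b} x *\<^sub>R g x\<bar>"])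
    show "(\<lambda>x. g x * indicator {a<..<b} x) \<in> borel_measurable lborel"
      unfolding eq_f using gm by measurable
    fix n
    show "(\<lambda>x. g x * phi n x) \<in> borel_measurable lborel"
      unfolding eq_s using gm borel_measurable_continuous_onI[OF phi_cont[of n]] by measurable
    show "integrable lborel (\<lambda>x. \<bar>indicator {a..b} x *\<^sub>R g x\<bar>)" using gi by simp
    show "AE x in lborel. norm (g x * phi n x) \<le> \<bar>indicator {a..b} x *\<^sub>R g x\<bar>"
    proof (rule AE_I2)
      fix x
      show "norm (g x * phi n x) \<le> \<bar>indicator {a..b} x *\<^sub>R g x\<bar>"
      proof (cases "x \<in> {a<..<b}")
        case True
        then show ?thesis using phi_bnd[of n x]
          by (simp add: abs_mult indicator_def mult_left_le)
      next
        case False then show ?thesis by (simp add: phi_out)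
      qed
    qed
  next
    show "AE x in lborel. (\<lambda>n. g x * phi n x) \<longlonglongrightarrow> g x * indicator {a<..<b} x"
    proof (rule AE_I2)
      fix x
      show "(\<lambda>n. g x * phi n x) \<longlonglongrightarrow> g x * indicator {a<..<b} x"
      proof (cases "x \<in> {a<..<b}")
        case False then show ?thesis by (simp add: phi_out)
      next
        case True
        then have pos: "0 < min (x - a) (b - x)" by auto
        have "eventually (\<lambda>n. e n < min (x - a) (b - x)) sequentially"
          using order_tendstoD(2)[OF elim pos] .
        then have "eventually (\<lambda>n. g x * indicator {a<..<b} x = g x * phi n x) sequentially"
        proof eventually_elim
          case (elim n)
          then have "(x - a) / e n \<ge> 1" "(x - (b - e n)) / e n \<le> 0"
            using epos[of n] by (auto simp: field_simps)
          then show ?case using True by (simp add: phi_def S_le0 S_ge1)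
        qed
        then show ?thesis by (rule Lim_transform_eventually[OF tendsto_const])
      qed
    qed
  qed
  have "(\<lambda>n. - (\<integral>x. g x * phi n x \<partial>lborel)) \<longlonglongrightarrow> - (\<integral>x. g x * indicator {a<..<b} x \<partial>lborel)"
    using tendsto_minus[OF RHS] .
  with LHS have "\<psi> a - \<psi> b = - (\<integral>x. g x * indicator {a<..<b} x \<partial>lborel)"
    using LIMSEQ_unique by blast
  then show ?thesis by simp
qed

lemma piece:
  fixes g :: "real \<Rightarrow> real"
  assumes gi: "integrable lborel (\<lambda>x. indicator {p..q} x *\<^sub>R g x)" and pq: "p < q" and h: "h \<ge> 0"
    and I: "h \<le> \<bar>\<integral>x. g x * indicator {p<..<q} x \<partial>lborel\<bar>"
  shows "ennreal (h^2 / (2*(q-p))) \<le> (\<integral>\<^sup>+x. ennreal ((g x * indicator {p<..<q} x)^2 / 2) \<partial>lborel)"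
proof -
  define f where "f x = g x * indicator {p<..<q} x" for x
  define L where "L = q - p"
  have L: "L > 0" using pq by (simp add: L_def)
  have "integrable lborel (\<lambda>x. (indicator {p..q} x *\<^sub>R g x) * indicator {p<..<q} x)"
    by (rule integrable_real_mult_indicator[OF _ gi]) simp
  moreover have "(indicator {p..q} x *\<^sub>R g x) * indicator {p<..<q} x = f x" for x
    by (auto simp: f_def indicator_def)
  ultimately have fi: "integrable lborel f" by simp
  have fm: "f \<in> borel_measurable lborel" using fi by (rule borel_measurable_integrable)
  have ii: "integrable lborel (indicator {p<..<q} :: real \<Rightarrow> real)"
    using pq by (intro integrable_real_indicator) auto
  have iint: "(\<integral>x. indicator {p<..<q} x \<partial>lborel) = L" using pq by (simp add: L_def)
  show ?thesis
  proof (cases "integrable lborel (\<lambda>x. (f x)^2 / 2)")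
    case True
    have f2: "integrable lborel (\<lambda>x. (f x)^2)"
      using integrable_mult_right[OF True, of 2] by simp
    define Iv where "Iv = (\<integral>x. f x \<partial>lborel)"
    define k where "k = Iv / L"
    have expand: "(f x - k * indicator {p<..<q} x)^2 = (f x)^2 - 2 * k * f x + k^2 * indicator {p<..<q} x" for x
      by (cases "x \<in> {p<..<q}") (auto simp: f_def power2_eq_square algebra_simps)
    have "0 \<le> (\<integral>x. (f x - k * indicator {p<..<q} x)^2 \<partial>lborel)"
      by (rule integral_nonneg_AE) simp
    also have "\<dots> = (\<integral>x. (f x)^2 - 2 * k * f x + k^2 * indicator {p<..<q} x \<partial>lborel)"
      by (simp add: expand)
    also have "\<dots> = (\<integral>x. (f x)^2 \<partial>lborel) - 2 * k * Iv + k^2 * L"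
      using f2 fi ii iint by (simp add: Iv_def)
    finally have "(\<integral>x. (f x)^2 \<partial>lborel) \<ge> 2 * k * Iv - k^2 * L" by simp
    moreover have "2 * k * Iv - k^2 * L = Iv^2 / L" using L by (simp add: k_def power2_eq_square field_simps)
    moreover have "h^2 \<le> Iv^2"
      using I h unfolding Iv_def f_def by (metis abs_ge_zero power2_abs power_mono)
    ultimately have main: "h^2 / L \<le> (\<integral>x. (f x)^2 \<partial>lborel)"
      using L by (smt (verit) divide_right_mono)
    have "(\<integral>\<^sup>+x. ennreal ((f x)^2 / 2) \<partial>lborel) = ennreal (\<integral>x. (f x)^2 / 2 \<partial>lborel)"
      by (rule nn_integral_eq_integral[OF True]) simp
    also have "(\<integral>x. (f x)^2 / 2 \<partial>lborel) = (\<integral>x. (f x)^2 \<partial>lborel) / 2" by simp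
    finally have eq: "(\<integral>\<^sup>+x. ennreal ((f x)^2 / 2) \<partial>lborel) = ennreal ((\<integral>x. (f x)^2 \<partial>lborel) / 2)" .
    have "h^2 / (2 * L) \<le> (\<integral>x. (f x)^2 \<partial>lborel) / 2" using main by (simp add: field_simps)
    then show ?thesis unfolding f_def[symmetric] L_def[symmetric] eq by (rule ennreal_leI)
  next
    case False
    have m: "(\<lambda>x. (f x)^2 / 2) \<in> borel_measurable lborel" using fm by measurable
    then have "\<not> (\<integral>\<^sup>+x. ennreal (norm ((f x)^2 / 2)) \<partial>lborel) < \<infinity>"
      using False integrable_iff_bounded by blast
    moreover have nrm: "(\<lambda>x. ennreal (norm ((f x)^2 / 2))) = (\<lambda>x. ennreal ((f x)^2 / 2))"
      by (simp add: fun_eq_iff)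
    ultimately have "\<not> (\<integral>\<^sup>+x. ennreal ((f x)^2 / 2) \<partial>lborel) < \<infinity>" by simp
    then have "(\<integral>\<^sup>+x. ennreal ((f x)^2 / 2) \<partial>lborel) = \<infinity>" by (simp add: less_top[symmetric])
    then show ?thesis unfolding f_def[symmetric] by simp
  qed
qed

lemma length_bound:
  fixes \<psi> :: "real \<Rightarrow> real"
  assumes psi_nonneg: "\<And>y. \<psi> y \<ge> 0" and psi_int: "integrable lborel \<psi>"
    and mass: "(\<integral>y. \<psi> y \<partial>lborel) = w"
    and uv: "u \<le> v" and gt: "\<And>x. x \<in> {u<..<v} \<Longrightarrow> \<psi> x > h"
  shows "(v - u) * h \<le> w"
proof -
  have ii: "integrable lborel (indicator {u<..<v} :: real \<Rightarrow> real)"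
    using uv by (intro integrable_real_indicator) auto
  have "(v - u) * h = (\<integral>x. h * indicator {u<..<v} x \<partial>lborel)"
    using uv by simp
  also have "\<dots> \<le> (\<integral>x. \<psi> x * indicator {u<..<v} x \<partial>lborel)"
  proof (rule integral_mono)
    show "integrable lborel (\<lambda>x. h * indicator {u<..<v} x)" using ii by simp
    show "integrable lborel (\<lambda>x. \<psi> x * indicator {u<..<v} x)"
      by (rule integrable_real_mult_indicator) (simp_all add: psi_int)
    fix x show "h * indicator {u<..<v} x \<le> \<psi> x * indicator {u<..<v} x"
      using gt[of x] by (auto simp: indicator_def less_imp_le)
  qed
  also have "\<dots> \<le> (\<integral>x. \<psi> x \<partial>lborel)"
  proof (rule integral_mono)
    show "integrable lborel (\<lambda>x. \<psi> x * indicator {u<..<v} x)"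
      by (rule integrable_real_mult_indicator) (simp_all add: psi_int)
    show "integrable lborel \<psi>" by (rule psi_int)
    fix x show "\<psi> x * indicator {u<..<v} x \<le> \<psi> x"
      using psi_nonneg[of x] by (auto simp: indicator_def)
  qed
  finally show ?thesis using mass by simp
qed

lemma recip_ineq:
  fixes L1 L2 h w :: real
  assumes "L1 > 0" "L2 > 0" "h > 0" "w > 0" "(L1 + L2) * h \<le> w"
  shows "(2 * h) ^ 3 / 8 / (w / 2) \<le> h^2 / (2 * L1) + h^2 / (2 * L2)"
proof -
  have sq: "0 \<le> (L1 - L2) * (L1 - L2)" by simp
  have q: "4 * (L1 * L2) \<le> (L1 + L2) * (L1 + L2)" using sq by (simp add: algebra_simps)
  have e: "1/L1 + 1/L2 = (L1 + L2) / (L1 * L2)" using assms by (simp add: field_simps)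
  have b: "4/(L1+L2) \<le> 1/L1 + 1/L2" unfolding e using q assms
    by (simp add: divide_simps)
  have c: "h / w \<le> 1 / (L1 + L2)" using assms by (simp add: divide_simps mult.commute)
  have "(2 * h) ^ 3 / 8 / (w / 2) = 2 * h^2 * (h / w)" by (simp add: power3_eq_cube power2_eq_square)
  also have "\<dots> \<le> 2 * h^2 * (1 / (L1 + L2))" using c assms by (intro mult_left_mono) auto
  also have "\<dots> = (h^2 / 2) * (4 / (L1 + L2))" by simp
  also have "\<dots> \<le> (h^2 / 2) * (1/L1 + 1/L2)" using b by (intro mult_left_mono) auto
  also have "\<dots> = h^2 / (2 * L1) + h^2 / (2 * L2)" by (simp add: field_simps)
  finally show ?thesis .
qed

theorem mainTheorem4:
  fixes c \<psi> :: "real \<Rightarrow> real" and w \<psi>max :: real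
  assumes c_nonneg: "\<And>s. s \<ge> 0 \<Longrightarrow> c s \<ge> 0"
    and psi_nonneg: "\<And>y. \<psi> y \<ge> 0"
    and psi_cont: "continuous_on UNIV \<psi>"
    and psi_int: "integrable lborel \<psi>"
    and mass: "(\<integral>y. \<psi> y \<partial>lborel) = w"
    and w_pos: "w > 0"
    and max_attained: "\<exists>y0. \<psi> y0 = \<psi>max"
    and max_bound: "\<And>y. \<psi> y \<le> \<psi>max"
  shows "energy c \<psi> \<ge> ennreal ((\<psi>max / 2) ^ 3 / (w / 2))"
proof (cases "\<exists>g. weak_deriv \<psi> g")
  case False
  then show ?thesis by (simp add: energy_def)
next
  case True
  define g where "g = (SOME g. weak_deriv \<psi> g)"
  have wd: "weak_deriv \<psi> g" unfolding g_def using True by (rule someI_ex)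
  have en: "energy c \<psi> = (\<integral>\<^sup>+ y. ennreal ((1/2) * \<bar>g y\<bar>^2 + c \<bar>\<psi> y\<bar>) \<partial>lborel)"
    using True by (simp add: energy_def g_def)
  obtain y0 where y0: "\<psi> y0 = \<psi>max" using max_attained by blast
  define h where "h = \<psi>max / 2"
  have Mpos: "\<psi>max > 0"
  proof (rule ccontr)
    assume "\<not> \<psi>max > 0"
    then have "\<psi> y = 0" for y using psi_nonneg[of y] max_bound[of y] by simp
    then have "w = 0" using mass by simp
    then show False using w_pos by simp
  qed
  have hpos: "h > 0" using Mpos by (simp add: h_def)
  have lb: "(v - u) * h \<le> w" if "u \<le> v" "\<And>x. x \<in> {u<..<v} \<Longrightarrow> \<psi> x > h" for u v
    by (rule length_bound[OF psi_nonneg psi_int mass that])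
  have cl: "closed {x. \<psi> x \<le> h}"
    using closed_Collect_le[OF psi_cont continuous_on_const] by simp
  define A where "A = {x. x \<le> y0 \<and> \<psi> x \<le> h}"
  have A_ne: "A \<noteq> {}"
  proof
    assume "A = {}"
    then have gt: "\<psi> x > h" if "x \<le> y0" for x
    proof -
      have "x \<notin> A" using \<open>A = {}\<close> by blast
      then show ?thesis using that unfolding A_def by auto
    qed
    define T where "T = w / h + 1"
    have "w / h > 0" using w_pos hpos by simp
    then have "T > 0" unfolding T_def by linarith
    have "(y0 - (y0 - T)) * h \<le> w" using \<open>T > 0\<close> gt by (intro lb) auto
    moreover have "(y0 - (y0 - T)) * h = w + h" using hpos by (simp add: T_def field_simps)
    ultimately show False using hpos by linarith
  qed
  have A_cl: "closed A"
  proof -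
    have "A = {x. x \<le> y0} \<inter> {x. \<psi> x \<le> h}" by (auto simp: A_def)
    then show ?thesis using cl by (simp add: closed_Int closed_Collect_le)
  qed
  have A_bdd: "bdd_above A" by (auto simp: A_def bdd_above_def)
  define a where "a = Sup A"
  have aA: "a \<in> A" unfolding a_def by (rule closed_contains_Sup[OF A_ne A_bdd A_cl])
  have a_le: "a \<le> y0" "\<psi> a \<le> h" using aA by (auto simp: A_def)
  have a_lt: "a < y0" using a_le y0 hpos by (cases "a = y0") (auto simp: h_def)
  have a_gt: "\<psi> x > h" if "a < x" "x \<le> y0" for x
  proof (rule ccontr)
    assume "\<not> \<psi> x > h"
    then have "x \<in> A" using that by (auto simp: A_def)
    then have "x \<le> a" unfolding a_def using A_bdd by (rule cSup_upper)
    then show False using that by simp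
  qed
  define B where "B = {x. y0 \<le> x \<and> \<psi> x \<le> h}"
  have B_ne: "B \<noteq> {}"
  proof
    assume "B = {}"
    then have gt: "\<psi> x > h" if "x \<ge> y0" for x
    proof -
      have "x \<notin> B" using \<open>B = {}\<close> by blast
      then show ?thesis using that unfolding B_def by auto
    qed
    define T where "T = w / h + 1"
    have "w / h > 0" using w_pos hpos by simp
    then have "T > 0" unfolding T_def by linarith
    have "((y0 + T) - y0) * h \<le> w" using \<open>T > 0\<close> gt by (intro lb) auto
    moreover have "((y0 + T) - y0) * h = w + h" using hpos by (simp add: T_def field_simps)
    ultimately show False using hpos by linarith
  qed
  have B_cl: "closed B"
  proof -
    have "B = {x. y0 \<le> x} \<inter> {x. \<psi> x \<le> h}" by (auto simp: B_def)
    then show ?thesis using cl by (simp add: closed_Int closed_Collect_le)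
  qed
  have B_bdd: "bdd_below B" by (auto simp: B_def bdd_below_def)
  define b where "b = Inf B"
  have bB: "b \<in> B" unfolding b_def by (rule closed_contains_Inf[OF B_ne B_bdd B_cl])
  have b_ge: "y0 \<le> b" "\<psi> b \<le> h" using bB by (auto simp: B_def)
  have b_gt: "y0 < b" using b_ge y0 hpos by (cases "b = y0") (auto simp: h_def)
  have b_gt2: "\<psi> x > h" if "y0 \<le> x" "x < b" for x
  proof (rule ccontr)
    assume "\<not> \<psi> x > h"
    then have "x \<in> B" using that by (auto simp: B_def)
    then have "b \<le> x" unfolding b_def using B_bdd by (rule cInf_lower)
    then show False using that by simp
  qed
  have len: "(b - a) * h \<le> w"
  proof (rule lb)
    show "a \<le> b" using a_lt b_gt by simp
    fix x assume "x \<in> {a<..<b}"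
    then have x: "a < x" "x < b" by auto
    show "\<psi> x > h"
    proof (cases "x \<le> y0")
      case True then show ?thesis using a_gt x by blast
    next
      case False then show ?thesis using b_gt2 x by simp
    qed
  qed
  have gi: "integrable lborel (\<lambda>x. indicator {p..q} x *\<^sub>R g x)" for p q
    using wd unfolding weak_deriv_def locally_integrable_def set_integrable_def by blast
  have I1: "h \<le> \<bar>\<integral>x. g x * indicator {a<..<y0} x \<partial>lborel\<bar>"
    using weak_ftc[OF wd psi_cont a_lt] y0 a_le by (simp add: h_def)
  have I2: "h \<le> \<bar>\<integral>x. g x * indicator {y0<..<b} x \<partial>lborel\<bar>"
    using weak_ftc[OF wd psi_cont b_gt] y0 b_ge by (simp add: h_def)
  have P1: "ennreal (h^2 / (2*(y0-a))) \<le> (\<integral>\<^sup>+x. ennreal ((g x * indicator {a<..<y0} x)^2 / 2) \<partial>lborel)"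
    by (rule piece[OF gi a_lt less_imp_le[OF hpos] I1])
  have P2: "ennreal (h^2 / (2*(b-y0))) \<le> (\<integral>\<^sup>+x. ennreal ((g x * indicator {y0<..<b} x)^2 / 2) \<partial>lborel)"
    by (rule piece[OF gi b_gt less_imp_le[OF hpos] I2])
  have gm: "(\<lambda>x. g x * indicator {p<..<q} x) \<in> borel_measurable lborel" for p q
  proof -
    have "(\<lambda>x. (indicator {p..q} x *\<^sub>R g x) * indicator {p<..<q} x) \<in> borel_measurable lborel"
      using borel_measurable_integrable[OF gi[of p q]] by measurable
    moreover have "(\<lambda>x. (indicator {p..q} x *\<^sub>R g x) * indicator {p<..<q} x) = (\<lambda>x. g x * indicator {p<..<q} x)"
      by (auto simp: indicator_def fun_eq_iff)
    ultimately show ?thesis by simp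
  qed
  have "(\<integral>\<^sup>+x. ennreal ((g x * indicator {a<..<y0} x)^2 / 2) \<partial>lborel)
      + (\<integral>\<^sup>+x. ennreal ((g x * indicator {y0<..<b} x)^2 / 2) \<partial>lborel)
      = (\<integral>\<^sup>+x. ennreal ((g x * indicator {a<..<y0} x)^2 / 2) + ennreal ((g x * indicator {y0<..<b} x)^2 / 2) \<partial>lborel)"
  proof -
    have sq: "(\<lambda>t::real. ennreal (t^2 / 2)) \<in> borel_measurable borel" by measurable
    have m: "(\<lambda>x. ennreal ((g x * indicator {p<..<q} x)^2 / 2)) \<in> borel_measurable lborel" for p q
      using measurable_compose[OF gm[of p q] sq] by simp
    show ?thesis by (rule nn_integral_add[OF m m, symmetric])
  qed
  also have "\<dots> \<le> (\<integral>\<^sup>+ y. ennreal ((1/2) * \<bar>g y\<bar>^2 + c \<bar>\<psi> y\<bar>) \<partial>lborel)"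
  proof (rule nn_integral_mono)
    fix x
    have cx: "c \<bar>\<psi> x\<bar> \<ge> 0" by (rule c_nonneg) simp
    have "ennreal ((g x * indicator {a<..<y0} x)^2 / 2) + ennreal ((g x * indicator {y0<..<b} x)^2 / 2)
        = ennreal ((g x * indicator {a<..<y0} x)^2 / 2 + (g x * indicator {y0<..<b} x)^2 / 2)"
      by simp
    also have "\<dots> \<le> ennreal ((1/2) * \<bar>g x\<bar>^2 + c \<bar>\<psi> x\<bar>)"
      using cx by (intro ennreal_leI) (auto simp: indicator_def)
    finally show "ennreal ((g x * indicator {a<..<y0} x)^2 / 2) + ennreal ((g x * indicator {y0<..<b} x)^2 / 2)
        \<le> ennreal ((1/2) * \<bar>g x\<bar>^2 + c \<bar>\<psi> x\<bar>)" .
  qed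
  finally have E: "ennreal (h^2 / (2*(y0-a))) + ennreal (h^2 / (2*(b-y0))) \<le> energy c \<psi>"
    unfolding en using P1 P2 by (meson add_mono order_trans)
  have "(\<psi>max / 2) ^ 3 / (w / 2) \<le> h^2 / (2*(y0-a)) + h^2 / (2*(b-y0))"
  proof -
    have "\<psi>max = 2 * h" by (simp add: h_def)
    moreover have "(2 * h) ^ 3 / 8 / (w / 2) \<le> h^2 / (2*(y0-a)) + h^2 / (2*(b-y0))"
      using a_lt b_gt hpos w_pos len by (intro recip_ineq) auto
    ultimately show ?thesis by (simp add: power_divide)
  qed
  have "ennreal ((\<psi>max / 2) ^ 3 / (w / 2)) \<le> ennreal (h^2 / (2*(y0-a))) + ennreal (h^2 / (2*(b-y0)))"
  proof -
    have nn1: "h^2 / (2*(y0-a)) \<ge> 0" and nn2: "h^2 / (2*(b-y0)) \<ge> 0" using a_lt b_gt by auto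
    have "ennreal ((\<psi>max / 2) ^ 3 / (w / 2)) \<le> ennreal (h^2 / (2*(y0-a)) + h^2 / (2*(b-y0)))"
      using \<open>(\<psi>max / 2) ^ 3 / (w / 2) \<le> h^2 / (2*(y0-a)) + h^2 / (2*(b-y0))\<close> by (rule ennreal_leI)
    also have "\<dots> = ennreal (h^2 / (2*(y0-a))) + ennreal (h^2 / (2*(b-y0)))"
      by (rule ennreal_plus[OF nn1 nn2])
    finally show ?thesis .
  qed
  with E show ?thesis by simp
qed

end
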